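(* Let $n_r, n_d \ge 0$ and $n_c \ge 1$ be integers, let $m_1,\dots,m_{n_c}$ be positive integers, and set $\hat{m}_0=0$, $\hat{m}_h=\sum_{j=1}^h m_j$, and $n = n_r+n_d+\hat{m}_{n_c}$. Let $x^1,\dots,x^k\in\mathbb{R}^n$ be points satisfying, for every $i=1,\dots,k$ and every $h=1,\dots,n_c$, $x^i_{n_r+n_d+j}\in\{0,1\}$ for $j=\hat{m}_{h-1}+1,\dots,\hat{m}_h$ and $\sum_{j=\hat{m}_{h-1}+1}^{\hat{m}_h} x^i_{n_r+n_d+j} = 1$. Let $\phi:\mathbb{R}_+\to\mathbb{R}$ be any function, $\Phi = (\phi(\|x^i-x^j\|))_{i,j=1,\dots,k}$ (Euclidean norm), let $F\in\mathbb{R}^k$, and let $P$ be the $k\times(n+1)$ matrix whose $i$-th row is $((x^i)^\top, 1)$. Let $\hat{P}$ be the $k\times(n+1-n_c)$ matrix obtained from $P$ by deleting the columns corresponding to the coordinates $x_{n_r+n_d+\hat{m}_h}$ for $h=1,\dots,n_c$. If the system $$\begin{pmatrix}\Phi & P\\ P^\top & 0_{(n+1)\times(n+1)}\end{pmatrix}\begin{pmatrix}\lambda\\ \alpha\end{pmatrix} = \begin{pmatrix}F\\ 0_{n+1}\end{pmatrix}$$ has a solution $(\lambda,\alpha)\in\mathbb{R}^k\times\mathbb{R}^{n+1}$, then the system $$\begin{pmatrix}\Phi & \hat{P}\\ \hat{P}^\top & 0_{(n+1-n_c)\times(n+1-n_c)}\end{pmatrix}\begin{pmatrix}\lambda\\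 \alpha\end{pmatrix} = \begin{pmatrix}F\\ 0_{n+1-n_c}\end{pmatrix}$$ has a solution $(\lambda,\alpha)\in\mathbb{R}^k\times\mathbb{R}^{n+1-n_c}$.
   Context: This is the setting of radial basis function interpolation with a polynomial tail of degree $d=1$ (e.g. cubic $\phi(r)=r^3$ or thin plate spline $\phi(r)=r^2\log r$), where the interpolant is $s(x)=\sum_i\lambda_i\phi(\|x-x^i\|)+\alpha^\top(x,1)$ and $F$ is the vector of function values at the interpolation points. The last $\hat{m}_{n_c}$ coordinates are the unary (one-hot) encodings of $n_c$ categorical variables, the $h$-th having $m_h$ possible values. *)

theory Defs
  imports Complex_Main
begin

text \<open>Vectors in R^n are represented as functions nat => real, meaningful on indices 1..n;
  a family of k points is x :: nat => nat => real, point i in 1..k, coordinate j in 1..n.\<close>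

definition mhat :: "(nat \<Rightarrow> nat) \<Rightarrow> nat \<Rightarrow> nat" where
  "mhat m h = (\<Sum>j=1..h. m j)"

definition eucl_dist :: "nat \<Rightarrow> (nat \<Rightarrow> real) \<Rightarrow> (nat \<Rightarrow> real) \<Rightarrow> real" where
  "eucl_dist n a b = sqrt (\<Sum>j=1..n. (a j - b j)^2)"

definition Pmat :: "nat \<Rightarrow> (nat \<Rightarrow> nat \<Rightarrow> real) \<Rightarrow> nat \<Rightarrow> nat \<Rightarrow> real" where
  "Pmat n x i c = (if c = n + 1 then 1 else x i c)"

text \<open>Solvability of the saddle-point system
  [Phi Q; Q^T 0] (lambda, alpha) = (F, 0), where Q is the submatrix of P formed by the
  columns with indices in the set C (rows 1..k); alpha is indexed by C.\<close>
definition saddle_solvable ::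
  "nat \<Rightarrow> (nat \<Rightarrow> nat \<Rightarrow> real) \<Rightarrow> (nat \<Rightarrow> nat \<Rightarrow> real) \<Rightarrow> nat set \<Rightarrow> (nat \<Rightarrow> real) \<Rightarrow> bool" where
  "saddle_solvable k Phi P C F \<longleftrightarrow>
     (\<exists>lam alpha :: nat \<Rightarrow> real.
        (\<forall>i\<in>{1..k}. (\<Sum>l=1..k. Phi i l * lam l) + (\<Sum>c\<in>C. P i c * alpha c) = F i) \<and>
        (\<forall>c\<in>C. (\<Sum>i=1..k. P i c * lam i) = 0))"

end

theory Submission
  imports Defs
begin

lemma mhat_mono: "h \<le> h' \<Longrightarrow> mhat m h \<le> mhat m h'"
  unfolding mhat_def by (rule sum_mono2) auto

lemma mhat_Suc: "mhat m (Suc h) = mhat m h + m (Suc h)"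
  unfolding mhat_def by simp

lemma mhat_strict:
  assumes "\<forall>h\<in>{1..nc}. m h > 0" "h < h'" "h' \<le> nc"
  shows "mhat m h < mhat m h'"
  using assms(2,3)
proof (induction h')
  case 0 then show ?case by simp
next
  case (Suc h')
  have "m (Suc h') > 0" using assms(1) Suc.prems by auto
  then have "mhat m h' < mhat m (Suc h')" by (simp add: mhat_Suc)
  moreover have "mhat m h \<le> mhat m h'" using Suc.prems by (intro mhat_mono) auto
  ultimately show ?case by simp
qed

theorem proposition2:
  fixes nr nd nc k n :: nat and m :: "nat \<Rightarrow> nat" and x :: "nat \<Rightarrow> nat \<Rightarrow> real"
    and phi :: "real \<Rightarrow> real" and F :: "nat \<Rightarrow> real"
  assumes nc_pos: "nc \<ge> 1"
    and m_pos: "\<forall>h\<in>{1..nc}. m h > 0"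
    and n_def: "n = nr + nd + mhat m nc"
    and onehot: "\<forall>i\<in>{1..k}. \<forall>h\<in>{1..nc}.
        (\<forall>j\<in>{mhat m (h - 1) + 1..mhat m h}. x i (nr + nd + j) \<in> {0, 1}) \<and>
        (\<Sum>j=mhat m (h - 1) + 1..mhat m h. x i (nr + nd + j)) = 1"
    and solv: "saddle_solvable k (\<lambda>i l. phi (eucl_dist n (x i) (x l))) (Pmat n x) {1..n+1} F"
  shows "saddle_solvable k (\<lambda>i l. phi (eucl_dist n (x i) (x l))) (Pmat n x)
           ({1..n+1} - {nr + nd + mhat m h | h. h \<in> {1..nc}}) F"
proof -
  define a where "a = nr + nd"
  define L where "L h = a + mhat m h" for h
  define C where "C = {1..n+1}"
  define D where "D = L ` {1..nc}"
  have Deq: "{nr + nd + mhat m h | h. h \<in> {1..nc}} = D"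
    unfolding D_def L_def a_def by auto
  define C' where "C' = C - D"
  define P where "P = Pmat n x"
  define Phi where "Phi = (\<lambda>i l. phi (eucl_dist n (x i) (x l)))"
  define Bm where "Bm h = {a + mhat m (h-1) + 1..L h} - {L h}" for h
  define e where "e h c = (if c = n+1 then 1 else if c \<in> Bm h then -1 else (0::real))" for h c
  obtain lam alpha where
    eq1: "\<forall>i\<in>{1..k}. (\<Sum>l=1..k. Phi i l * lam l) + (\<Sum>c\<in>C. P i c * alpha c) = F i" and
    eq2: "\<forall>c\<in>C. (\<Sum>i=1..k. P i c * lam i) = 0"
    using solv unfolding saddle_solvable_def Phi_def P_def C_def by blast
  define alpha' where "alpha' c = alpha c + (\<Sum>h\<in>{1..nc}. alpha (L h) * e h c)" for c
  have Lle: "L h \<le> n" if "h \<in> {1..nc}" for h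
    using that mhat_mono[of h nc m] unfolding L_def n_def a_def by auto
  have Lge: "L h \<ge> 1" if "h \<in> {1..nc}" for h
    using that mhat_strict[OF m_pos, of 0 h] unfolding L_def by (simp add: mhat_def)
  have injL: "inj_on L {1..nc}"
  proof (rule inj_onI)
    fix h h' assume "h \<in> {1..nc}" "h' \<in> {1..nc}" "L h = L h'"
    then show "h = h'" using mhat_strict[OF m_pos, of h h'] mhat_strict[OF m_pos, of h' h]
      unfolding L_def by (cases "h < h'"; cases "h' < h") auto
  qed
  have BmC': "Bm h \<subseteq> C'" if h: "h \<in> {1..nc}" for h
  proof
    fix c assume c: "c \<in> Bm h"
    have c1: "c \<ge> 1" "c \<le> n" "c < L h" "c > a + mhat m (h-1)"
      using c Lle[OF h] unfolding Bm_def by auto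
    have "c \<noteq> L h'" if h': "h' \<in> {1..nc}" for h'
    proof (cases "h' < h")
      case True
      then have "mhat m h' \<le> mhat m (h-1)" by (intro mhat_mono) auto
      then show ?thesis using c1 unfolding L_def by auto
    next
      case False
      show ?thesis
      proof (cases "h' = h")
        case True then show ?thesis using c1 by auto
      next
        case False2: False
        then have "mhat m h < mhat m h'" using False h' by (intro mhat_strict[OF m_pos]) auto
        then show ?thesis using c1 unfolding L_def by auto
      qed
    qed
    then show "c \<in> C'" using c1 unfolding C'_def C_def D_def by fastforce
  qed
  have n1C': "n+1 \<in> C'"
    using Lle unfolding C'_def C_def D_def by force
  have n1Bm: "n+1 \<notin> Bm h" if "h \<in> {1..nc}" for h
    using Lle[OF that] unfolding Bm_def by auto
  have blk: "(\<Sum>c\<in>Bm h. x i c) = 1 - x i (L h)" if i: "i \<in> {1..k}" and h: "h \<in> {1..nc}" for i h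
  proof -
    have s: "(\<Sum>j=mhat m (h - 1) + 1..mhat m h. x i (a + j)) = 1"
      using onehot i h unfolding a_def by auto
    have "(\<Sum>j=mhat m (h - 1) + 1..mhat m h. x i (a + j)) = (\<Sum>c=a + mhat m (h-1) + 1..L h. x i c)"
      unfolding L_def
      using sum.shift_bounds_cl_nat_ivl[of "x i" "mhat m (h - 1) + 1" a "mhat m h"]
      by (simp add: add.commute add.left_commute)
    moreover have "mhat m (h-1) < mhat m h" using h by (intro mhat_strict[OF m_pos]) auto
    then have "L h \<in> {a + mhat m (h-1) + 1..L h}" unfolding L_def by auto
    then have "(\<Sum>c=a + mhat m (h-1) + 1..L h. x i c) = x i (L h) + (\<Sum>c\<in>Bm h. x i c)"
      unfolding Bm_def by (simp add: sum.remove)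
    ultimately show ?thesis using s by simp
  qed
  have claim1: "(\<Sum>c\<in>C'. P i c * e h c) = x i (L h)" if i: "i \<in> {1..k}" and h: "h \<in> {1..nc}" for i h
  proof -
    have fin: "finite C'" unfolding C'_def C_def by simp
    have sub: "insert (n+1) (Bm h) \<subseteq> C'" using BmC'[OF h] n1C' by auto
    have "(\<Sum>c\<in>C'. P i c * e h c) = (\<Sum>c\<in>insert (n+1) (Bm h). P i c * e h c)"
      by (rule sum.mono_neutral_right[OF fin sub]) (auto simp: e_def)
    also have "\<dots> = P i (n+1) * e h (n+1) + (\<Sum>c\<in>Bm h. P i c * e h c)"
      using n1Bm[OF h] unfolding Bm_def by (simp add: sum.insert)
    also have "(\<Sum>c\<in>Bm h. P i c * e h c) = (\<Sum>c\<in>Bm h. - x i c)"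
      using n1Bm[OF h] by (intro sum.cong) (auto simp: e_def P_def Pmat_def)
    also have "\<dots> = - (1 - x i (L h))" using blk[OF i h] by (simp add: sum_negf)
    finally show ?thesis by (simp add: P_def Pmat_def e_def)
  qed
  have row: "(\<Sum>c\<in>C'. P i c * alpha' c) = (\<Sum>c\<in>C. P i c * alpha c)" if i: "i \<in> {1..k}" for i
  proof -
    have "(\<Sum>c\<in>C'. P i c * alpha' c) = (\<Sum>c\<in>C'. P i c * alpha c) + (\<Sum>c\<in>C'. \<Sum>h\<in>{1..nc}. alpha (L h) * (P i c * e h c))"
      unfolding alpha'_def by (simp add: algebra_simps sum.distrib sum_distrib_left)
    also have "(\<Sum>c\<in>C'. \<Sum>h\<in>{1..nc}. alpha (L h) * (P i c * e h c)) = (\<Sum>h\<in>{1..nc}. alpha (L h) * (\<Sum>c\<in>C'. P i c * e h c))"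
      by (simp add: sum.swap[of _ C'] sum_distrib_left)
    also have "\<dots> = (\<Sum>h\<in>{1..nc}. alpha (L h) * x i (L h))"
      using claim1[OF i] by simp
    also have "\<dots> = (\<Sum>c\<in>D. P i c * alpha c)"
      unfolding D_def using injL Lle by (simp add: sum.reindex P_def Pmat_def mult.commute, intro sum.cong) force+
    also have "(\<Sum>c\<in>C'. P i c * alpha c) + (\<Sum>c\<in>D. P i c * alpha c) = (\<Sum>c\<in>C. P i c * alpha c)"
    proof -
      have "D \<subseteq> C" unfolding D_def C_def using Lle Lge by force
      then show ?thesis unfolding C'_def
        by (metis C_def add.commute finite_atLeastAtMost sum.subset_diff)
    qed
    finally show ?thesis .
  qed
  have "\<forall>i\<in>{1..k}. (\<Sum>l=1..k. Phi i l * lam l) + (\<Sum>c\<in>C'. P i c * alpha' c) = F i"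
    using row eq1 by auto
  moreover have "\<forall>c\<in>C'. (\<Sum>i=1..k. P i c * lam i) = 0" using eq2 unfolding C'_def by auto
  ultimately show ?thesis
    unfolding saddle_solvable_def Deq C'_def[symmetric, unfolded C_def] P_def[symmetric] Phi_def[symmetric]
    by blast
qed

end
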